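(* Let $N\ge 1$ be an integer and let $T\geq N^{3}$. Then in the $T$-period forecasting game with forecast grid $D=\{1/(2N),3/(2N),\dots,(2N-1)/(2N)\}$ there exists a mixed strategy of the forecaster such that $\mathbb{E}[K_T]\le 1/N$ against every mixed strategy of the rainmaker.
   Context: Forecasting game: fix a positive integer $N$, the grid $D=\{1/(2N),3/(2N),\dots,(2N-1)/(2N)\}\subset[0,1]$ (which has $N$ points), and a horizon $T$. In each period $t=1,\dots,T$ the rainmaker chooses the weather $a_t\in\{0,1\}$ (1 = rain) and the forecaster chooses a forecast $c_t\in D$; both players have perfect recall, i.e. each may condition its period-$t$ choice on the full history $h_{t-1}=(a_1,c_1,\dots,a_{t-1},c_{t-1})\in(\{0,1\}\times D)^{t-1}$. A pure strategy of a player is a map from histories to its choice set; a mixed strategy is a probability distribution over its (finitely many) pure strategies. For $d\in D$ let $n(d)=\sum_{t=1}^T \mathbf 1_{c_t=d}$ and, when $n(d)>0$, $\bar a(d)=\frac{1}{n(d)}\sum_{t=1}^T\mathbf 1_{c_t=d}\,a_t$. The calibration score is $K_T=\sum_{d\in D}\frac{n(d)}{T}\,|\bar a(d)-d|$ (terms with $n(d)=0$ are $0$); equivalently $K_T=\frac1T\sum_{d\in D}\big|\sum_{t=1}^T\mathbf 1_{c_t=d}(a_t-d)\big|$. Expectations are over the random choices of both players. *)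

theory Defs
  imports "HOL-Probability.Probability"
begin

text \<open>Histories: lists of (weather, forecast) pairs; weather True = rain (a = 1).\<close>
type_synonym history = "(bool \<times> real) list"
type_synonym rain_strategy = "history \<Rightarrow> bool"
type_synonym fc_strategy = "history \<Rightarrow> real"

definition grid :: "nat \<Rightarrow> real set" where
  "grid N = {(2 * real k + 1) / (2 * real N) | k. k < N}"

fun play :: "rain_strategy \<Rightarrow> fc_strategy \<Rightarrow> nat \<Rightarrow> history" where
  "play f g 0 = []"
| "play f g (Suc t) = (let h = play f g t in h @ [(f h, g h)])"

text \<open>Calibration score K_T of a history of length T (period t is entry t, 0-based).\<close>
definition calib :: "nat \<Rightarrow> nat \<Rightarrow> history \<Rightarrow> real" where
  "calib N T h = (1 / real T) * (\<Sum>d\<in>grid N.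
      \<bar>\<Sum>t<T. (if snd (h ! t) = d then of_bool (fst (h ! t)) - d else 0)\<bar>)"

definition fc_pure :: "nat \<Rightarrow> fc_strategy \<Rightarrow> bool" where
  "fc_pure N g \<longleftrightarrow> (\<forall>h. g h \<in> grid N)"

definition fc_mixed :: "nat \<Rightarrow> fc_strategy pmf \<Rightarrow> bool" where
  "fc_mixed N \<tau> \<longleftrightarrow> finite (set_pmf \<tau>) \<and> (\<forall>g\<in>set_pmf \<tau>. fc_pure N g)"

definition rain_mixed :: "rain_strategy pmf \<Rightarrow> bool" where
  "rain_mixed \<sigma> \<longleftrightarrow> finite (set_pmf \<sigma>)"

definition expected_K :: "nat \<Rightarrow> nat \<Rightarrow> rain_strategy pmf \<Rightarrow> fc_strategy pmf \<Rightarrow> real" where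
  "expected_K N T \<sigma> \<tau> =
     measure_pmf.expectation (pair_pmf \<sigma> \<tau>) (\<lambda>(f, g). calib N T (play f g T))"

end

theory Submission
  imports Defs
begin

lemma dz_step:
  fixes s y k :: real
  assumes "k \<ge> 0"
  shows "max (\<bar>s + y\<bar> - k) 0 \<le> \<bar>max (\<bar>s\<bar> - k) 0 + (if s \<ge> 0 then 1 else -1) * y\<bar>"
  using assms by (cases "s \<ge> 0"; cases "s + y \<ge> 0"; cases "\<bar>s\<bar> \<ge> k") auto

lemma key_ineq:
  fixes s k w p c :: real
  assumes k: "k \<ge> 0" and w: "w \<ge> 0" and p: "0 \<le> p" "p \<le> 1" and pc: "\<bar>p - c\<bar> \<le> w"
  shows "p * (max (\<bar>s + 1 - c\<bar> - (k + w)) 0)\<^sup>2 + (1 - p) * (max (\<bar>s + 0 - c\<bar> - (k + w)) 0)\<^sup>2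
         \<le> (max (\<bar>s\<bar> - k) 0)\<^sup>2 + 1/4"
proof -
  define H where "H = max (\<bar>s\<bar> - k) 0"
  define \<sigma> where "\<sigma> = (if s \<ge> 0 then 1 else -1::real)"
  have H0: "H \<ge> 0" unfolding H_def by simp
  have s2: "\<sigma>\<^sup>2 = 1" unfolding \<sigma>_def by simp
  have b1: "max (\<bar>s + 1 - c\<bar> - (k + w)) 0 \<le> \<bar>H + \<sigma> * (1 - p)\<bar>"
  proof -
    have "max (\<bar>s + 1 - c\<bar> - (k + w)) 0 \<le> max (\<bar>s + (1 - p)\<bar> - k) 0"
      using pc by (auto simp: abs_if split: if_splits)
    also have "\<dots> \<le> \<bar>H + \<sigma> * (1 - p)\<bar>" unfolding H_def \<sigma>_def by (rule dz_step[OF k])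
    finally show ?thesis .
  qed
  have b0: "max (\<bar>s + 0 - c\<bar> - (k + w)) 0 \<le> \<bar>H + \<sigma> * (- p)\<bar>"
  proof -
    have "max (\<bar>s + 0 - c\<bar> - (k + w)) 0 \<le> max (\<bar>s + (- p)\<bar> - k) 0"
      using pc by (auto simp: abs_if split: if_splits)
    also have "\<dots> \<le> \<bar>H + \<sigma> * (- p)\<bar>" unfolding H_def \<sigma>_def by (rule dz_step[OF k])
    finally show ?thesis .
  qed
  have q1: "(max (\<bar>s + 1 - c\<bar> - (k + w)) 0)\<^sup>2 \<le> (H + \<sigma> * (1 - p))\<^sup>2"
    using b1 by (metis abs_le_square_iff abs_of_nonneg max.cobounded2)
  have q0: "(max (\<bar>s + 0 - c\<bar> - (k + w)) 0)\<^sup>2 \<le> (H + \<sigma> * (- p))\<^sup>2"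
    using b0 by (metis abs_le_square_iff abs_of_nonneg max.cobounded2)
  have "p * (max (\<bar>s + 1 - c\<bar> - (k + w)) 0)\<^sup>2 + (1 - p) * (max (\<bar>s + 0 - c\<bar> - (k + w)) 0)\<^sup>2
     \<le> p * (H + \<sigma> * (1 - p))\<^sup>2 + (1 - p) * (H + \<sigma> * (- p))\<^sup>2"
    using q1 q0 p by (intro add_mono mult_left_mono) auto
  also have "\<dots> = H\<^sup>2 + \<sigma>\<^sup>2 * (p * (1 - p))"
    by (simp add: power2_eq_square algebra_simps)
  also have "\<dots> \<le> H\<^sup>2 + 1/4"
  proof -
    have "0 \<le> (p - 1/2)\<^sup>2" by simp
    then have "p * (1 - p) \<le> 1/4" by (simp add: power2_eq_square algebra_simps)
    then show ?thesis using s2 by simp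
  qed
  finally show ?thesis unfolding H_def .
qed

lemma minimax2:
  fixes C :: "'c set" and A0 A1 :: "'c \<Rightarrow> real" and K :: real
  assumes fin: "finite C"
    and H: "\<And>p. 0 \<le> p \<Longrightarrow> p \<le> 1 \<Longrightarrow> \<exists>c\<in>C. p * A1 c + (1 - p) * A0 c \<le> K"
  shows "\<exists>d\<in>C. \<exists>e\<in>C. \<exists>l. 0 \<le> l \<and> l \<le> 1 \<and>
           l * A0 d + (1 - l) * A0 e \<le> K \<and> l * A1 d + (1 - l) * A1 e \<le> K"
proof (cases "\<exists>c\<in>C. A0 c \<le> K \<and> A1 c \<le> K")
  case True
  then obtain c where "c \<in> C" "A0 c \<le> K" "A1 c \<le> K" by blast
  then show ?thesis by (intro bexI[of _ c] exI[of _ 1]) auto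
next
  case False
  define D0 where "D0 = {c\<in>C. A0 c \<le> K}"
  define D1 where "D1 = {c\<in>C. A1 c \<le> K}"
  define r where "r c = (K - A0 c) / (A1 c - A0 c)" for c
  define l where "l c = (A0 c - K) / (A0 c - A1 c)" for c
  have D0ne: "D0 \<noteq> {}" using H[of 0] unfolding D0_def by auto
  have D1ne: "D1 \<noteq> {}" using H[of 1] unfolding D1_def by auto
  have finD0: "finite D0" "finite D1" using fin unfolding D0_def D1_def by auto
  have "Max (r ` D0) \<in> r ` D0" using finD0 D0ne by (intro Max_in) auto
  then obtain d where d: "d \<in> D0" "r d = Max (r ` D0)" by (metis imageE)
  have "Min (l ` D1) \<in> l ` D1" using finD0 D1ne by (intro Min_in) auto
  then obtain e where e: "e \<in> D1" "l e = Min (l ` D1)" by (metis imageE)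
  have rmax: "r c \<le> r d" if "c \<in> D0" for c using d finD0 that by auto
  have lmin: "l e \<le> l c" if "c \<in> D1" for c using e finD0 that by auto
  have D0c: "A0 c \<le> K \<and> A1 c > K" if "c \<in> D0" for c using False that unfolding D0_def by auto
  have D1c: "A1 c \<le> K \<and> A0 c > K" if "c \<in> D1" for c using False that unfolding D1_def by auto
  have inD0: "p * A1 c + (1 - p) * A0 c \<le> K \<longleftrightarrow> p \<le> r c" if "c \<in> D0" for c p
  proof -
    have "A1 c - A0 c > 0" using D0c[OF that] by auto
    then show ?thesis unfolding r_def by (simp add: pos_le_divide_eq algebra_simps)
  qed
  have inD1: "p * A1 c + (1 - p) * A0 c \<le> K \<longleftrightarrow> l c \<le> p" if "c \<in> D1" for c p
  proof -
    have "A0 c - A1 c > 0" using D1c[OF that] by auto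
    then show ?thesis unfolding l_def by (simp add: pos_divide_le_eq algebra_simps)
  qed
  have le: "l e \<le> r d"
  proof (rule ccontr)
    assume "\<not> l e \<le> r d"
    define p where "p = (l e + r d) / 2"
    have "r d < p" "p < l e" using \<open>\<not> l e \<le> r d\<close> unfolding p_def by auto
    have r0: "0 \<le> r d" using D0c[OF d(1)] unfolding r_def by simp
    have l1: "l e \<le> 1" using D1c[OF e(1)] unfolding l_def by simp
    have "0 \<le> p" "p \<le> 1" using \<open>r d < p\<close> \<open>p < l e\<close> r0 l1 by auto
    then obtain c where c: "c \<in> C" "p * A1 c + (1 - p) * A0 c \<le> K" using H by blast
    show False
    proof (cases "c \<in> D0")
      case True
      then show False using inD0[OF True] c rmax[OF True] \<open>r d < p\<close> by auto
    next
      case nD0: False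
      show False
      proof (cases "c \<in> D1")
        case True
        then show False using inD1[OF True] c lmin[OF True] \<open>p < l e\<close> by auto
      next
        case False
        then have "A0 c > K" "A1 c > K" using nD0 c(1) unfolding D0_def D1_def by auto
        have a: "p * (A1 c - K) \<ge> 0" "(1 - p) * (A0 c - K) \<ge> 0"
          using \<open>0 \<le> p\<close> \<open>p \<le> 1\<close> \<open>A0 c > K\<close> \<open>A1 c > K\<close> by auto
        have b: "p * (A1 c - K) > 0 \<or> (1 - p) * (A0 c - K) > 0"
          using \<open>0 \<le> p\<close> \<open>p \<le> 1\<close> \<open>A0 c > K\<close> \<open>A1 c > K\<close>
          by (cases "p = 0") auto
        have "p * A1 c + (1 - p) * A0 c - K = p * (A1 c - K) + (1 - p) * (A0 c - K)"
          by (simp add: algebra_simps)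
        then show False using a b c by linarith
      qed
    qed
  qed
  define \<alpha> where "\<alpha> = K - A0 d"
  define \<beta> where "\<beta> = A1 d - K"
  define \<gamma> where "\<gamma> = A0 e - K"
  define \<delta> where "\<delta> = K - A1 e"
  have pos: "\<alpha> \<ge> 0" "\<beta> > 0" "\<gamma> > 0" "\<delta> \<ge> 0"
    using D0c[OF d(1)] D1c[OF e(1)] unfolding \<alpha>_def \<beta>_def \<gamma>_def \<delta>_def by auto
  have "\<gamma> / (\<gamma> + \<delta>) \<le> \<alpha> / (\<alpha> + \<beta>)"
    using le unfolding l_def r_def \<alpha>_def \<beta>_def \<gamma>_def \<delta>_def by (simp add: algebra_simps)
  then have cross: "\<gamma> * \<beta> \<le> \<alpha> * \<delta>" using pos
    by (simp add: divide_le_eq le_divide_eq algebra_simps)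
  define lam where "lam = \<gamma> / (\<alpha> + \<gamma>)"
  have ag: "\<alpha> + \<gamma> > 0" using pos by auto
  have lam01: "0 \<le> lam" "lam \<le> 1" unfolding lam_def using pos ag by auto
  have om: "1 - lam = \<alpha> / (\<alpha> + \<gamma>)" using ag by (simp add: lam_def field_simps)
  have "lam * A0 d + (1 - lam) * A0 e - K = lam * (- \<alpha>) + (1 - lam) * \<gamma>"
    by (simp add: \<alpha>_def \<gamma>_def algebra_simps)
  also have "\<dots> = 0" unfolding om lam_def using ag by (simp add: field_simps)
  finally have e0: "lam * A0 d + (1 - lam) * A0 e - K = 0" .
  have "lam * A1 d + (1 - lam) * A1 e - K = lam * \<beta> + (1 - lam) * (- \<delta>)"
    by (simp add: \<beta>_def \<delta>_def algebra_simps)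
  also have "\<dots> = \<gamma> * \<beta> / (\<alpha> + \<gamma>) - \<alpha> * \<delta> / (\<alpha> + \<gamma>)"
    by (subst om) (simp add: lam_def)
  also have "\<dots> = (\<gamma> * \<beta> - \<alpha> * \<delta>) / (\<alpha> + \<gamma>)" by (simp add: diff_divide_distrib)
  finally have e1: "lam * A1 d + (1 - lam) * A1 e - K = (\<gamma> * \<beta> - \<alpha> * \<delta>) / (\<alpha> + \<gamma>)" .
  have "(\<gamma> * \<beta> - \<alpha> * \<delta>) / (\<alpha> + \<gamma>) \<le> 0" using cross ag by (simp add: divide_nonpos_pos)
  then show ?thesis using e0 e1 lam01 d(1) e(1) unfolding D0_def D1_def
    by (intro bexI[of _ d] bexI[of _ e] exI[of _ lam]) auto
qed

definition Sd :: "real \<Rightarrow> history \<Rightarrow> real" where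
  "Sd d h = (\<Sum>t<length h. (if snd (h ! t) = d then of_bool (fst (h ! t)) - d else 0))"
definition cnt :: "real \<Rightarrow> history \<Rightarrow> real" where
  "cnt d h = (\<Sum>t<length h. (if snd (h ! t) = d then 1 else 0))"
definition Gd :: "nat \<Rightarrow> real \<Rightarrow> history \<Rightarrow> real" where
  "Gd N d h = max (\<bar>Sd d h\<bar> - cnt d h / (2 * real N)) 0"
definition Psi :: "nat \<Rightarrow> history \<Rightarrow> real" where
  "Psi N h = (\<Sum>d\<in>grid N. (Gd N d h)\<^sup>2)"
definition Adelta :: "nat \<Rightarrow> history \<Rightarrow> bool \<Rightarrow> real \<Rightarrow> real" where
  "Adelta N h a c = (Gd N c (h @ [(a, c)]))\<^sup>2 - (Gd N c h)\<^sup>2"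

lemma sum_app:
  "(\<Sum>t<length (h @ [x]). F ((h @ [x]) ! t)) = (\<Sum>t<length h. F (h ! t)) + F x"
  unfolding length_append_singleton sum.lessThan_Suc by (auto simp: nth_append intro!: sum.cong)

lemma Sd_app: "Sd d (h @ [(a, c)]) = Sd d h + (if c = d then of_bool a - d else 0)"
  unfolding Sd_def using sum_app[of "\<lambda>x. if snd x = d then of_bool (fst x) - d else 0" h "(a,c)"] by simp

lemma cnt_app: "cnt d (h @ [(a, c)]) = cnt d h + (if c = d then 1 else 0)"
  unfolding cnt_def using sum_app[of "\<lambda>x. if snd x = d then 1 else (0::real)" h "(a,c)"] by simp

lemma finite_grid: "finite (grid N)"
proof -
  have "grid N = (\<lambda>k. (2 * real k + 1) / (2 * real N)) ` {..<N}" unfolding grid_def by auto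
  then show ?thesis by simp
qed

lemma Psi_app:
  assumes "c \<in> grid N"
  shows "Psi N (h @ [(a, c)]) = Psi N h + Adelta N h a c"
proof -
  have "Psi N (h @ [(a, c)]) = (\<Sum>d\<in>grid N. (Gd N d h)\<^sup>2 + (if d = c then Adelta N h a c else 0))"
    unfolding Psi_def by (intro sum.cong) (auto simp: Adelta_def Gd_def Sd_app cnt_app)
  also have "\<dots> = Psi N h + Adelta N h a c"
    using assms by (simp add: sum.distrib Psi_def finite_grid)
  finally show ?thesis .
qed

lemma card_grid: "card (grid N) \<le> N"
proof -
  have "grid N = (\<lambda>k. (2 * real k + 1) / (2 * real N)) ` {..<N}" unfolding grid_def by auto
  then show ?thesis using card_image_le[of "{..<N}"] by simp
qed

lemma nearest:
  assumes N: "N \<ge> 1" and p: "0 \<le> p" "p \<le> 1"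
  shows "\<exists>c\<in>grid N. \<bar>p - c\<bar> \<le> 1 / (2 * real N)"
proof -
  have "\<exists>k. k < N \<and> real k \<le> p * N \<and> p * N \<le> real k + 1"
  proof (cases "p = 1")
    case True
    then show ?thesis using N by (intro exI[of _ "N - 1"]) auto
  next
    case False
    then have lt: "p * N < N" using p N by auto
    define k where "k = nat \<lfloor>p * N\<rfloor>"
    have k: "real k = of_int \<lfloor>p * N\<rfloor>" unfolding k_def using p by simp
    have "real k \<le> p * N" "p * N \<le> real k + 1" unfolding k
      using of_int_floor_le[of "p*N"] real_of_int_floor_add_one_ge[of "p*N"] by auto
    moreover have "k < N" using \<open>real k \<le> p * N\<close> lt by linarith
    ultimately show ?thesis by blast
  qed
  then obtain k where k: "k < N" "real k \<le> p * N" "p * N \<le> real k + 1" by blast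
  define c where "c = (2 * real k + 1) / (2 * real N)"
  have "c \<in> grid N" unfolding c_def grid_def using k by auto
  moreover have "\<bar>p - c\<bar> \<le> 1 / (2 * real N)"
  proof -
    have Np: "real N > 0" using N by simp
    have "p - c = (2 * (p * N) - 2 * real k - 1) / (2 * real N)" unfolding c_def using Np
      by (simp add: field_simps)
    moreover have "\<bar>2 * (p * N) - 2 * real k - 1\<bar> \<le> 1" using k by auto
    ultimately show ?thesis using Np by (simp add: divide_right_mono abs_divide)
  qed
  ultimately show ?thesis by blast
qed

lemma step_ex:
  assumes N: "N \<ge> 1"
  shows "\<exists>d\<in>grid N. \<exists>e\<in>grid N. \<exists>l. 0 \<le> l \<and> l \<le> 1 \<and>
           l * Adelta N h False d + (1 - l) * Adelta N h False e \<le> 1/4 \<and>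
           l * Adelta N h True d + (1 - l) * Adelta N h True e \<le> 1/4"
proof (rule minimax2[OF finite_grid])
  fix p :: real assume p: "0 \<le> p" "p \<le> 1"
  obtain c where c: "c \<in> grid N" "\<bar>p - c\<bar> \<le> 1 / (2 * real N)" using nearest[OF N p] by blast
  have k: "cnt c h / (2 * real N) \<ge> 0" unfolding cnt_def by (intro divide_nonneg_nonneg sum_nonneg) auto
  have eq: "(cnt c h + 1) / (2 * real N) = cnt c h / (2 * real N) + 1 / (2 * real N)"
    by (simp add: add_divide_distrib)
  have "p * (max (\<bar>Sd c h + 1 - c\<bar> - (cnt c h / (2 * real N) + 1 / (2 * real N))) 0)\<^sup>2
      + (1 - p) * (max (\<bar>Sd c h + 0 - c\<bar> - (cnt c h / (2 * real N) + 1 / (2 * real N))) 0)\<^sup>2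
      \<le> (max (\<bar>Sd c h\<bar> - cnt c h / (2 * real N)) 0)\<^sup>2 + 1/4"
    by (rule key_ineq[OF k _ p c(2)]) simp
  moreover have g1: "Gd N c (h @ [(True, c)]) = max (\<bar>Sd c h + 1 - c\<bar> - (cnt c h / (2 * real N) + 1 / (2 * real N))) 0"
    by (simp add: Gd_def Sd_app cnt_app add_divide_distrib)
  moreover have g0: "Gd N c (h @ [(False, c)]) = max (\<bar>Sd c h + 0 - c\<bar> - (cnt c h / (2 * real N) + 1 / (2 * real N))) 0"
    by (simp add: Gd_def Sd_app cnt_app add_divide_distrib)
  ultimately have "p * Adelta N h True c + (1 - p) * Adelta N h False c \<le> 1/4"
    unfolding Adelta_def Gd_def[of N c h] by (simp add: algebra_simps)
  then show "\<exists>c\<in>grid N. p * Adelta N h True c + (1 - p) * Adelta N h False c \<le> 1/4"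
    using c(1) by blast
qed

definition choice :: "nat \<Rightarrow> history \<Rightarrow> real \<times> real \<times> real" where
  "choice N h = (SOME (d, e, l). d \<in> grid N \<and> e \<in> grid N \<and> 0 \<le> l \<and> l \<le> 1 \<and>
       (\<forall>a. l * Adelta N h a d + (1 - l) * Adelta N h a e \<le> 1/4))"

lemma choice_prop:
  assumes N: "N \<ge> 1" and ch: "choice N h = (d, e, l)"
  shows "d \<in> grid N \<and> e \<in> grid N \<and> 0 \<le> l \<and> l \<le> 1 \<and>
       (\<forall>a. l * Adelta N h a d + (1 - l) * Adelta N h a e \<le> 1/4)"
proof -
  let ?P = "\<lambda>(d, e, l). d \<in> grid N \<and> e \<in> grid N \<and> 0 \<le> l \<and> l \<le> 1 \<and>
       (\<forall>a. l * Adelta N h a d + (1 - l) * Adelta N h a e \<le> (1/4::real))"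
  obtain d' e' l' where "d' \<in> grid N" "e' \<in> grid N" "0 \<le> l'" "l' \<le> 1"
    "l' * Adelta N h False d' + (1 - l') * Adelta N h False e' \<le> 1/4"
    "l' * Adelta N h True d' + (1 - l') * Adelta N h True e' \<le> 1/4"
    using step_ex[OF N, of h] by blast
  note h = this
  have "\<forall>a. l' * Adelta N h a d' + (1 - l') * Adelta N h a e' \<le> 1/4"
  proof
    fix a show "l' * Adelta N h a d' + (1 - l') * Adelta N h a e' \<le> 1/4"
      using h by (cases a) auto
  qed
  then have "?P (d', e', l')" using h by auto
  then have "?P (SOME x. ?P x)" by (rule someI)
  then show ?thesis using ch unfolding choice_def by simp
qed

definition qf :: "nat \<Rightarrow> history \<Rightarrow> real pmf" where
  "qf N h = (case choice N h of (d, e, l) \<Rightarrow> map_pmf (\<lambda>b. if b then d else e) (bernoulli_pmf l))"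

lemma qf_set:
  assumes N: "N \<ge> 1"
  shows "set_pmf (qf N h) \<subseteq> grid N" "finite (set_pmf (qf N h))"
proof -
  obtain d e l where ch: "choice N h = (d, e, l)" by (cases "choice N h") auto
  note cp = choice_prop[OF N ch]
  have "set_pmf (qf N h) \<subseteq> {d, e}" unfolding qf_def ch by auto
  then show "set_pmf (qf N h) \<subseteq> grid N" "finite (set_pmf (qf N h))"
    using cp by (auto intro: finite_subset)
qed

lemma step_bound:
  assumes N: "N \<ge> 1"
  shows "measure_pmf.expectation (qf N h) (\<lambda>c. Psi N (h @ [(a, c)])) \<le> Psi N h + 1/4"
proof -
  obtain d e l where ch: "choice N h = (d, e, l)" by (cases "choice N h") auto
  note cp = choice_prop[OF N ch]
  have "measure_pmf.expectation (qf N h) (\<lambda>c. Psi N (h @ [(a, c)]))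
       = Psi N (h @ [(a, d)]) * l + Psi N (h @ [(a, e)]) * (1 - l)"
    unfolding qf_def ch using cp by simp
  also have "\<dots> = Psi N h + (l * Adelta N h a d + (1 - l) * Adelta N h a e)"
    using cp by (simp add: Psi_app algebra_simps)
  also have "\<dots> \<le> Psi N h + 1/4" using cp by simp
  finally show ?thesis .
qed

definition Hs :: "nat \<Rightarrow> nat \<Rightarrow> history set" where
  "Hs N t = {h. length h = t \<and> set h \<subseteq> UNIV \<times> grid N}"
definition d0 :: "nat \<Rightarrow> real" where "d0 N = 1 / (2 * real N)"
definition Ppmf :: "nat \<Rightarrow> nat \<Rightarrow> (history \<Rightarrow> real) pmf" where
  "Ppmf N t = Pi_pmf (Hs N t) (d0 N) (qf N)"
definition gof :: "(nat \<Rightarrow> history \<Rightarrow> real) \<Rightarrow> fc_strategy" where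
  "gof \<Phi> = (\<lambda>h. \<Phi> (length h) h)"
definition PiA :: "nat \<Rightarrow> nat set \<Rightarrow> (nat \<Rightarrow> history \<Rightarrow> real) pmf" where
  "PiA N A = Pi_pmf A (\<lambda>_. d0 N) (Ppmf N)"

lemma d0_grid: "N \<ge> 1 \<Longrightarrow> d0 N \<in> grid N"
  unfolding d0_def grid_def by (intro CollectI exI[of _ 0]) auto

lemma finite_Hs: "finite (Hs N t)"
proof -
  have "finite (UNIV \<times> grid N :: (bool \<times> real) set)" using finite_grid by simp
  then have "finite {xs :: history. set xs \<subseteq> UNIV \<times> grid N \<and> length xs = t}"
    by (rule finite_lists_length_eq)
  then show ?thesis unfolding Hs_def by (simp add: conj_commute)
qed

lemma Ppmf_set:
  assumes N: "N \<ge> 1"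
  shows "finite (set_pmf (Ppmf N t))" "y \<in> set_pmf (Ppmf N t) \<Longrightarrow> y h \<in> grid N"
proof -
  have s: "set_pmf (Ppmf N t) = PiE_dflt (Hs N t) (d0 N) (set_pmf \<circ> qf N)"
    unfolding Ppmf_def by (rule set_Pi_pmf[OF finite_Hs])
  show "finite (set_pmf (Ppmf N t))" unfolding s
    using qf_set[OF N] finite_Hs by (intro finite_PiE_dflt) auto
  assume "y \<in> set_pmf (Ppmf N t)"
  then show "y h \<in> grid N" unfolding s PiE_dflt_def using qf_set[OF N] d0_grid[OF N]
    by (cases "h \<in> Hs N t") auto
qed

lemma PiA_set:
  assumes N: "N \<ge> 1" and A: "finite A"
  shows "finite (set_pmf (PiA N A))" "\<Phi> \<in> set_pmf (PiA N A) \<Longrightarrow> \<Phi> i h \<in> grid N"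
proof -
  have s: "set_pmf (PiA N A) = PiE_dflt A (\<lambda>_. d0 N) (set_pmf \<circ> Ppmf N)"
    unfolding PiA_def by (rule set_Pi_pmf[OF A])
  show "finite (set_pmf (PiA N A))" unfolding s
    using Ppmf_set[OF N] A by (intro finite_PiE_dflt) auto
  assume "\<Phi> \<in> set_pmf (PiA N A)"
  then show "\<Phi> i h \<in> grid N" unfolding s PiE_dflt_def using Ppmf_set[OF N] d0_grid[OF N]
    by (cases "i \<in> A") auto
qed

lemma play_length: "length (play f g t) = t"
  by (induction t) (auto simp: Let_def)

lemma play_grid: "(\<And>h. g h \<in> grid N) \<Longrightarrow> set (play f g t) \<subseteq> UNIV \<times> grid N"
  by (induction t) (auto simp: Let_def)

lemma play_cong: "(\<And>i. i < t \<Longrightarrow> \<Phi> i = \<Phi>' i) \<Longrightarrow> play f (gof \<Phi>) t = play f (gof \<Phi>') t"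
proof (induction t)
  case 0 then show ?case by simp
next
  case (Suc t)
  then have IH: "play f (gof \<Phi>) t = play f (gof \<Phi>') t" by auto
  have "gof \<Phi> (play f (gof \<Phi>) t) = gof \<Phi>' (play f (gof \<Phi>) t)"
    unfolding gof_def play_length using Suc.prems by simp
  then show ?case using IH by (simp add: Let_def)
qed

lemma exp_sum:
  fixes f :: "'a \<Rightarrow> real"
  assumes "finite (set_pmf M)"
  shows "measure_pmf.expectation M f = (\<Sum>a\<in>set_pmf M. f a * pmf M a)"
  by (rule integral_measure_pmf_real) (use assms in auto)

lemma exp_mono:
  fixes f g :: "'a \<Rightarrow> real"
  assumes "finite (set_pmf M)" "\<And>x. x \<in> set_pmf M \<Longrightarrow> f x \<le> g x"
  shows "measure_pmf.expectation M f \<le> measure_pmf.expectation M g"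
  unfolding exp_sum[OF assms(1)] using assms(2)
  by (intro sum_mono mult_right_mono) auto

lemma exp_pair_swap:
  fixes F :: "'a \<times> 'b \<Rightarrow> real"
  assumes A: "finite (set_pmf A)" and B: "finite (set_pmf B)"
  shows "measure_pmf.expectation (pair_pmf A B) F =
         measure_pmf.expectation B (\<lambda>b. measure_pmf.expectation A (\<lambda>a. F (a, b)))"
proof -
  have fp: "finite (set_pmf (pair_pmf A B))" using A B by simp
  have "measure_pmf.expectation (pair_pmf A B) F = (\<Sum>x\<in>set_pmf A \<times> set_pmf B. F x * pmf (pair_pmf A B) x)"
    using exp_sum[OF fp] by simp
  also have "\<dots> = (\<Sum>a\<in>set_pmf A. \<Sum>b\<in>set_pmf B. F (a, b) * (pmf A a * pmf B b))"
    by (subst sum.cartesian_product) (auto intro!: sum.cong simp: pmf_pair)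
  also have "\<dots> = (\<Sum>b\<in>set_pmf B. \<Sum>a\<in>set_pmf A. F (a, b) * (pmf A a * pmf B b))"
    by (rule sum.swap)
  also have "\<dots> = (\<Sum>b\<in>set_pmf B. (\<Sum>a\<in>set_pmf A. F (a, b) * pmf A a) * pmf B b)"
    by (simp add: sum_distrib_right mult.assoc)
  also have "\<dots> = measure_pmf.expectation B (\<lambda>b. measure_pmf.expectation A (\<lambda>a. F (a, b)))"
    by (simp add: exp_sum[OF A] exp_sum[OF B])
  finally show ?thesis .
qed

lemma exp_pair:
  fixes F :: "'a \<times> 'b \<Rightarrow> real"
  assumes A: "finite (set_pmf A)" and B: "finite (set_pmf B)"
  shows "measure_pmf.expectation (pair_pmf A B) F =
         measure_pmf.expectation A (\<lambda>a. measure_pmf.expectation B (\<lambda>b. F (a, b)))"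
proof -
  have fp: "finite (set_pmf (pair_pmf A B))" using A B by simp
  have "measure_pmf.expectation (pair_pmf A B) F = (\<Sum>x\<in>set_pmf A \<times> set_pmf B. F x * pmf (pair_pmf A B) x)"
    using exp_sum[OF fp] by simp
  also have "\<dots> = (\<Sum>a\<in>set_pmf A. \<Sum>b\<in>set_pmf B. F (a, b) * (pmf A a * pmf B b))"
    by (subst sum.cartesian_product) (auto intro!: sum.cong simp: pmf_pair)
  also have "\<dots> = (\<Sum>a\<in>set_pmf A. (\<Sum>b\<in>set_pmf B. F (a, b) * pmf B b) * pmf A a)"
    by (simp add: sum_distrib_left sum_distrib_right mult_ac)
  also have "\<dots> = measure_pmf.expectation A (\<lambda>a. measure_pmf.expectation B (\<lambda>b. F (a, b)))"
    by (simp add: exp_sum[OF A] exp_sum[OF B])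
  finally show ?thesis .
qed

lemma exp_add_const:
  fixes f :: "'a \<Rightarrow> real"
  assumes "finite (set_pmf M)"
  shows "measure_pmf.expectation M (\<lambda>x. f x + c) = measure_pmf.expectation M f + c"
proof -
  have "measure_pmf.expectation M (\<lambda>x. f x + c) = measure_pmf.expectation M f + measure_pmf.expectation M (\<lambda>_. c)"
    by (rule Bochner_Integration.integral_add) (use assms in \<open>auto intro: integrable_measure_pmf_finite\<close>)
  then show ?thesis by simp
qed

lemma main_ind:
  assumes N: "N \<ge> 1"
  shows "finite A \<Longrightarrow> {..<t} \<subseteq> A \<Longrightarrow>
    measure_pmf.expectation (PiA N A) (\<lambda>\<Phi>. Psi N (play f (gof \<Phi>) t)) \<le> real t / 4"
proof (induction t arbitrary: A)
  case 0
  have "Psi N [] = 0" by (simp add: Psi_def Gd_def Sd_def cnt_def)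
  then show ?case by simp
next
  case (Suc t)
  define A' where "A' = A - {t}"
  have A'f: "finite A'" and tA': "t \<notin> A'" and Aeq: "A = insert t A'" and sub: "{..<t} \<subseteq> A'"
    using Suc.prems unfolding A'_def by auto
  have decomp: "PiA N A = map_pmf (\<lambda>(y, F). F(t := y)) (pair_pmf (Ppmf N t) (PiA N A'))"
    unfolding PiA_def Aeq by (rule Pi_pmf_insert[OF A'f tA'])
  have fA': "finite (set_pmf (PiA N A'))" using PiA_set[OF N A'f] by blast
  have fP: "finite (set_pmf (Ppmf N t))" using Ppmf_set[OF N] by blast
  have "measure_pmf.expectation (PiA N A) (\<lambda>\<Phi>. Psi N (play f (gof \<Phi>) (Suc t)))
      = measure_pmf.expectation (pair_pmf (Ppmf N t) (PiA N A'))
          (\<lambda>x. Psi N (play f (gof ((snd x)(t := fst x))) (Suc t)))"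
    unfolding decomp by (simp add: case_prod_beta del: play.simps)
  also have "\<dots> = measure_pmf.expectation (PiA N A')
          (\<lambda>F. measure_pmf.expectation (Ppmf N t) (\<lambda>y. Psi N (play f (gof (F(t := y))) (Suc t))))"
    using exp_pair_swap[OF fP fA', of "\<lambda>x. Psi N (play f (gof ((snd x)(t := fst x))) (Suc t))"] by (simp del: play.simps)
  also have "\<dots> \<le> measure_pmf.expectation (PiA N A') (\<lambda>F. Psi N (play f (gof F) t) + 1/4)"
  proof (rule exp_mono[OF fA'])
    fix F assume F: "F \<in> set_pmf (PiA N A')"
    define h where "h = play f (gof F) t"
    have hl: "length h = t" unfolding h_def by (rule play_length)
    have "set h \<subseteq> UNIV \<times> grid N" unfolding h_def
      by (rule play_grid) (use PiA_set(2)[OF N A'f F] in \<open>simp add: gof_def\<close>)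
    then have hHs: "h \<in> Hs N t" unfolding Hs_def using hl by simp
    have pl: "play f (gof (F(t := y))) (Suc t) = h @ [(f h, y h)]" for y
    proof -
      have "play f (gof (F(t := y))) t = h" unfolding h_def by (rule play_cong) auto
      then show ?thesis using hl by (simp add: Let_def gof_def)
    qed
    have mp: "map_pmf (\<lambda>y. y h) (Ppmf N t) = qf N h"
      unfolding Ppmf_def by (subst Pi_pmf_component[OF finite_Hs]) (use hHs in simp)
    have "measure_pmf.expectation (Ppmf N t) (\<lambda>y. Psi N (play f (gof (F(t := y))) (Suc t)))
        = measure_pmf.expectation (Ppmf N t) (\<lambda>y. Psi N (h @ [(f h, y h)]))"
      using pl by simp
    also have "\<dots> = measure_pmf.expectation (qf N h) (\<lambda>c. Psi N (h @ [(f h, c)]))"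
      by (simp flip: mp)
    also have "\<dots> \<le> Psi N h + 1/4" by (rule step_bound[OF N])
    finally show "measure_pmf.expectation (Ppmf N t) (\<lambda>y. Psi N (play f (gof (F(t := y))) (Suc t)))
        \<le> Psi N (play f (gof F) t) + 1/4" unfolding h_def .
  qed
  also have "\<dots> = measure_pmf.expectation (PiA N A') (\<lambda>F. Psi N (play f (gof F) t)) + 1/4"
    by (rule exp_add_const[OF fA'])
  also have "\<dots> \<le> real t / 4 + 1/4" using Suc.IH[OF A'f sub] by simp
  finally show ?case by simp
qed

lemma pointwise:
  assumes N: "N \<ge> 1" and T: "T \<ge> 1" and hl: "length h = T"
  shows "calib N T h \<le> (real N ^ 2 * Psi N h / T + 3 * T / (4 * N)) / T"
proof -
  have Np: "real N > 0" using N by simp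
  have Tp: "real T > 0" using T by simp
  have c: "calib N T h = (\<Sum>d\<in>grid N. \<bar>Sd d h\<bar>) / T"
    unfolding calib_def Sd_def hl by simp
  have s1: "\<bar>Sd d h\<bar> \<le> Gd N d h + cnt d h / (2 * real N)" for d
    unfolding Gd_def by simp
  have s2: "Gd N d h \<le> real N ^ 2 * (Gd N d h)\<^sup>2 / T + T / (4 * real N ^ 2)" for d
  proof -
    have "real N ^ 2 * (Gd N d h)\<^sup>2 / T + T / (4 * real N ^ 2) - Gd N d h
        = (real N * Gd N d h - T / (2 * real N))\<^sup>2 / T"
      using Np Tp by (simp add: field_simps power2_eq_square)
    also have "\<dots> \<ge> 0" by simp
    finally show ?thesis by simp
  qed
  have psi0: "Psi N h \<ge> 0" unfolding Psi_def by (simp add: sum_nonneg)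
  have s3: "(\<Sum>d\<in>grid N. cnt d h) \<le> T"
  proof -
    have "(\<Sum>d\<in>grid N. cnt d h) = (\<Sum>t<T. \<Sum>d\<in>grid N. (if snd (h ! t) = d then 1 else 0))"
      unfolding cnt_def hl by (rule sum.swap)
    also have "\<dots> \<le> (\<Sum>t<T. (1::real))"
      by (intro sum_mono) (simp add: sum.delta' finite_grid)
    finally show ?thesis by simp
  qed
  have "(\<Sum>d\<in>grid N. \<bar>Sd d h\<bar>) \<le> (\<Sum>d\<in>grid N. real N ^ 2 * (Gd N d h)\<^sup>2 / T + T / (4 * real N ^ 2) + cnt d h / (2 * real N))"
    by (intro sum_mono) (use s1 s2 in \<open>smt (verit)\<close>)
  also have "\<dots> = real N ^ 2 * Psi N h / T + card (grid N) * (T / (4 * real N ^ 2)) + (\<Sum>d\<in>grid N. cnt d h) / (2 * real N)"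
    by (simp add: sum.distrib Psi_def sum_divide_distrib sum_distrib_left)
  also have "\<dots> \<le> real N ^ 2 * Psi N h / T + N * (T / (4 * real N ^ 2)) + T / (2 * real N)"
    using card_grid[of N] s3 Np Tp psi0
    by (intro add_mono mult_right_mono divide_right_mono) auto
  also have "\<dots> = real N ^ 2 * Psi N h / T + 3 * T / (4 * N)"
    using Np by (simp add: field_simps power2_eq_square)
  finally show ?thesis unfolding c using Tp by (simp add: divide_right_mono)
qed

definition tau :: "nat \<Rightarrow> nat \<Rightarrow> fc_strategy pmf" where
  "tau N T = map_pmf gof (PiA N {..<T})"

lemma exp_lin:
  fixes f :: "'a \<Rightarrow> real"
  assumes "finite (set_pmf M)"
  shows "measure_pmf.expectation M (\<lambda>x. a * f x + b) = a * measure_pmf.expectation M f + b"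
  using exp_add_const[OF assms, of "\<lambda>x. a * f x" b] by simp

lemma per_f:
  assumes N: "N \<ge> 1" and T: "T \<ge> N ^ 3"
  shows "measure_pmf.expectation (tau N T) (\<lambda>g. calib N T (play f g T)) \<le> 1 / real N"
proof -
  have Np: "real N > 0" using N by simp
  have T1: "T \<ge> 1" using T N by (metis one_le_power order_trans)
  have Tp: "real T > 0" using T1 by simp
  have TN: "real N ^ 3 \<le> real T" using T by (metis of_nat_le_iff of_nat_power)
  have fin: "finite (set_pmf (PiA N {..<T}))" using PiA_set[OF N] by blast
  have "measure_pmf.expectation (tau N T) (\<lambda>g. calib N T (play f g T))
      = measure_pmf.expectation (PiA N {..<T}) (\<lambda>\<Phi>. calib N T (play f (gof \<Phi>) T))"
    unfolding tau_def by simp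
  also have "\<dots> \<le> measure_pmf.expectation (PiA N {..<T})
       (\<lambda>\<Phi>. (real N ^ 2 / T / T) * Psi N (play f (gof \<Phi>) T) + 3 * T / (4 * N) / T)"
    by (rule exp_mono[OF fin]) (use pointwise[OF N T1 play_length] in \<open>simp add: add_divide_distrib\<close>)
  also have "\<dots> = (real N ^ 2 / T / T) * measure_pmf.expectation (PiA N {..<T}) (\<lambda>\<Phi>. Psi N (play f (gof \<Phi>) T))
        + 3 * T / (4 * N) / T"
    by (rule exp_lin[OF fin])
  also have "\<dots> \<le> (real N ^ 2 / T / T) * (real T / 4) + 3 * T / (4 * N) / T"
    using main_ind[OF N, of "{..<T}" T f] by (intro add_mono mult_left_mono) auto
  also have "\<dots> = real N ^ 2 / (4 * T) + 3 / (4 * N)"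
    using Np Tp by (simp add: field_simps power2_eq_square)
  also have "\<dots> \<le> 1 / (4 * N) + 3 / (4 * N)"
  proof -
    have "real N ^ 2 / (4 * T) \<le> 1 / (4 * N)"
      using Np Tp TN by (simp add: field_simps power2_eq_square power3_eq_cube)
    then show ?thesis by simp
  qed
  also have "\<dots> = 1 / real N" by simp
  finally show ?thesis .
qed

theorem theorem2:
  fixes N T :: nat
  assumes "N \<ge> 1" and "T \<ge> N ^ 3"
  shows "\<exists>\<tau>. fc_mixed N \<tau> \<and>
           (\<forall>\<sigma>. rain_mixed \<sigma> \<longrightarrow> expected_K N T \<sigma> \<tau> \<le> 1 / real N)"
proof (intro exI[of _ "tau N T"] conjI allI impI)
  have fin: "finite (set_pmf (PiA N {..<T}))" using PiA_set[OF assms(1)] by blast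
  then have fint: "finite (set_pmf (tau N T))" unfolding tau_def by simp
  show "fc_mixed N (tau N T)"
    unfolding fc_mixed_def fc_pure_def using fint
    by (auto simp: tau_def gof_def intro: PiA_set(2)[OF assms(1)])
  fix \<sigma> :: "rain_strategy pmf" assume "rain_mixed \<sigma>"
  then have fs: "finite (set_pmf \<sigma>)" unfolding rain_mixed_def .
  have "expected_K N T \<sigma> (tau N T) =
      measure_pmf.expectation \<sigma> (\<lambda>f. measure_pmf.expectation (tau N T) (\<lambda>g. calib N T (play f g T)))"
    unfolding expected_K_def using exp_pair[OF fs fint, of "\<lambda>(f, g). calib N T (play f g T)"]
    by simp
  also have "\<dots> \<le> measure_pmf.expectation \<sigma> (\<lambda>f. 1 / real N)"
    by (rule exp_mono[OF fs]) (rule per_f[OF assms])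
  also have "\<dots> = 1 / real N" by simp
  finally show "expected_K N T \<sigma> (tau N T) \<le> 1 / real N" .
qed

end
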